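(* Two elements $a,b\in C\ell_2\setminus\{0\}$ are pseudosimilar if and only if one of the following holds: (1) $\bar a+b=0$; (2) $H_a=H_b$ and $H_{\bar a+b}\neq 0$.
   Context: $C\ell_2$ is the 4-dimensional real associative algebra with basis $1,e_1,e_2,e_3$ and multiplication $e_1^2=e_2^2=1$, $e_3^2=-1$, $e_1e_2=e_3=-e_2e_1$, $e_1e_3=e_2=-e_3e_1$, $e_3e_2=e_1=-e_2e_3$. For $a=a_0+a_1e_1+a_2e_2+a_3e_3$ ($a_i\in\mathbb{R}$): $\bar a=a_0-a_1e_1-a_2e_2-a_3e_3$, $H_a=a\bar a=a_0^2-a_1^2-a_2^2+a_3^2$. $Z(C\ell_2)=\{a:H_a=0\}$. Elements $a,b$ are pseudosimilar if there exists $u\in C\ell_2\setminus Z(C\ell_2)$ with $au=\bar u b$. *)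

theory Defs
  imports Main "HOL.Real"
begin

text \<open>Elements of Cl_2: a = a0 + a1 e1 + a2 e2 + a3 e3, stored as coefficient quadruples.\<close>
datatype cl2 = Cl2 (c0: real) (c1: real) (c2: real) (c3: real)

definition cl2_zero :: cl2 where "cl2_zero = Cl2 0 0 0 0"

definition cl2_add :: "cl2 \<Rightarrow> cl2 \<Rightarrow> cl2" where
  "cl2_add a b = Cl2 (c0 a + c0 b) (c1 a + c1 b) (c2 a + c2 b) (c3 a + c3 b)"

text \<open>Multiplication from e1^2=e2^2=1, e3^2=-1, e1e2=e3=-e2e1, e1e3=e2=-e3e1, e3e2=e1=-e2e3.\<close>
definition cl2_mult :: "cl2 \<Rightarrow> cl2 \<Rightarrow> cl2" where
  "cl2_mult a b = Cl2
     (c0 a * c0 b + c1 a * c1 b + c2 a * c2 b - c3 a * c3 b)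
     (c0 a * c1 b + c1 a * c0 b - c2 a * c3 b + c3 a * c2 b)
     (c0 a * c2 b + c2 a * c0 b + c1 a * c3 b - c3 a * c1 b)
     (c0 a * c3 b + c3 a * c0 b + c1 a * c2 b - c2 a * c1 b)"

definition cl2_conj :: "cl2 \<Rightarrow> cl2" where
  "cl2_conj a = Cl2 (c0 a) (- c1 a) (- c2 a) (- c3 a)"

text \<open>H_a = a * conj a = a0^2 - a1^2 - a2^2 + a3^2 (a real scalar).\<close>
definition cl2_H :: "cl2 \<Rightarrow> real" where
  "cl2_H a = (c0 a)^2 - (c1 a)^2 - (c2 a)^2 + (c3 a)^2"

definition cl2_Z :: "cl2 set" where
  "cl2_Z = {a. cl2_H a = 0}"

definition pseudosimilar :: "cl2 \<Rightarrow> cl2 \<Rightarrow> bool" where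
  "pseudosimilar a b \<longleftrightarrow> (\<exists>u. u \<notin> cl2_Z \<and> cl2_mult a u = cl2_mult (cl2_conj u) b)"

end

theory Submission
  imports Defs
begin

lemma conv_dir:
  fixes a0 a1 a2 a3 b0 b1 b2 b3 u0 u1 u2 u3 :: real
  assumes Hu: "u0^2 - u1^2 - u2^2 + u3^2 \<noteq> 0"
  and e: "cl2_mult (Cl2 a0 a1 a2 a3) (Cl2 u0 u1 u2 u3) = cl2_mult (cl2_conj (Cl2 u0 u1 u2 u3)) (Cl2 b0 b1 b2 b3)"
  shows "a0^2 - a1^2 - a2^2 + a3^2 = b0^2 - b1^2 - b2^2 + b3^2"
    and "(a0 + b0 = 0 \<and> b1 - a1 = 0 \<and> b2 - a2 = 0 \<and> b3 - a3 = 0) \<or>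
         (a0 + b0)^2 - (b1 - a1)^2 - (b2 - a2)^2 + (b3 - a3)^2 \<noteq> 0"
proof -
  let ?H = "u0^2 - u1^2 - u2^2 + u3^2"
  have E0: "a0 * u0 + a1 * u1 + a2 * u2 - a3 * u3 = u0 * b0 - u1 * b1 - u2 * b2 + u3 * b3"
   and E1: "a0 * u1 + a1 * u0 - a2 * u3 + a3 * u2 = u0 * b1 - u1 * b0 + u2 * b3 - u3 * b2"
   and E2: "a0 * u2 + a2 * u0 + a1 * u3 - a3 * u1 = u0 * b2 - u2 * b0 - u1 * b3 + u3 * b1"
   and E3: "a0 * u3 + a3 * u0 + a1 * u2 - a2 * u1 = u0 * b3 - u3 * b0 - u1 * b2 + u2 * b1"
    using e by (simp_all add: cl2_mult_def cl2_conj_def)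
  let ?p0 = "a0 * u0 + a1 * u1 + a2 * u2 - a3 * u3"
  let ?p1 = "a0 * u1 + a1 * u0 - a2 * u3 + a3 * u2"
  let ?p2 = "a0 * u2 + a2 * u0 + a1 * u3 - a3 * u1"
  let ?p3 = "a0 * u3 + a3 * u0 + a1 * u2 - a2 * u1"
  have i1: "?p0^2 - ?p1^2 - ?p2^2 + ?p3^2 = (a0^2 - a1^2 - a2^2 + a3^2) * ?H"
    by algebra
  have i2: "(u0 * b0 - u1 * b1 - u2 * b2 + u3 * b3)^2 - (u0 * b1 - u1 * b0 + u2 * b3 - u3 * b2)^2
     - (u0 * b2 - u2 * b0 - u1 * b3 + u3 * b1)^2 + (u0 * b3 - u3 * b0 - u1 * b2 + u2 * b1)^2
     = (b0^2 - b1^2 - b2^2 + b3^2) * ?H"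
    by algebra
  have "(a0^2 - a1^2 - a2^2 + a3^2) * ?H = (b0^2 - b1^2 - b2^2 + b3^2) * ?H"
  proof -
    have "?p0^2 - ?p1^2 - ?p2^2 + ?p3^2 = (u0 * b0 - u1 * b1 - u2 * b2 + u3 * b3)^2 - (u0 * b1 - u1 * b0 + u2 * b3 - u3 * b2)^2
     - (u0 * b2 - u2 * b0 - u1 * b3 + u3 * b1)^2 + (u0 * b3 - u3 * b0 - u1 * b2 + u2 * b1)^2"
      by (simp only: E0 E1 E2 E3)
    then show ?thesis using i1 i2 by linarith
  qed
  then show "a0^2 - a1^2 - a2^2 + a3^2 = b0^2 - b1^2 - b2^2 + b3^2" using Hu by simp
  define w0 where "w0 = a0 + b0"
  define w1 where "w1 = b1 - a1"
  define w2 where "w2 = b2 - a2"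
  define w3 where "w3 = b3 - a3"
  define s where "s = u0 * w0 - u1 * w1 - u2 * w2 + u3 * w3"
  text \<open>conj u times w has zero vector part\<close>
  have v1: "u0 * w1 - u1 * w0 + u2 * w3 - u3 * w2 = 0"
    using E1 unfolding w0_def w1_def w2_def w3_def by algebra
  have v2: "u0 * w2 - u2 * w0 - u1 * w3 + u3 * w1 = 0"
    using E2 unfolding w0_def w1_def w2_def w3_def by algebra
  have v3: "u0 * w3 - u3 * w0 - u1 * w2 + u2 * w1 = 0"
    using E3 unfolding w0_def w1_def w2_def w3_def by algebra
  have f0: "?H * w0 = s * u0" using v1 v2 v3 unfolding s_def by algebra
  have f1: "?H * w1 = s * u1" using v1 v2 v3 unfolding s_def by algebra
  have f2: "?H * w2 = s * u2" using v1 v2 v3 unfolding s_def by algebra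
  have f3: "?H * w3 = s * u3" using v1 v2 v3 unfolding s_def by algebra
  have key: "?H^2 * (w0^2 - w1^2 - w2^2 + w3^2) = s^2 * ?H"
  proof -
    have "?H^2 * (w0^2 - w1^2 - w2^2 + w3^2) = (?H*w0)^2 - (?H*w1)^2 - (?H*w2)^2 + (?H*w3)^2"
      by algebra
    also have "\<dots> = s^2 * ?H" unfolding f0 f1 f2 f3 by algebra
    finally show ?thesis .
  qed
  show "(a0 + b0 = 0 \<and> b1 - a1 = 0 \<and> b2 - a2 = 0 \<and> b3 - a3 = 0) \<or>
         (a0 + b0)^2 - (b1 - a1)^2 - (b2 - a2)^2 + (b3 - a3)^2 \<noteq> 0"
  proof (cases "w0^2 - w1^2 - w2^2 + w3^2 = 0")
    case True
    then have "s = 0" using key Hu by simp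
    then have "w0 = 0 \<and> w1 = 0 \<and> w2 = 0 \<and> w3 = 0" using f0 f1 f2 f3 Hu by simp
    then show ?thesis unfolding w0_def w1_def w2_def w3_def by simp
  next
    case False
    then show ?thesis unfolding w0_def w1_def w2_def w3_def by simp
  qed
qed

theorem theorem5p3:
  fixes a b :: cl2
  assumes "a \<noteq> cl2_zero" and "b \<noteq> cl2_zero"
  shows "pseudosimilar a b \<longleftrightarrow>
           (cl2_add (cl2_conj a) b = cl2_zero \<or>
            (cl2_H a = cl2_H b \<and> cl2_H (cl2_add (cl2_conj a) b) \<noteq> 0))"
proof -
  obtain a0 a1 a2 a3 where A: "a = Cl2 a0 a1 a2 a3" by (cases a)
  obtain b0 b1 b2 b3 where B: "b = Cl2 b0 b1 b2 b3" by (cases b)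
  have anz: "\<not> (a0 = 0 \<and> a1 = 0 \<and> a2 = 0 \<and> a3 = 0)" using assms(1) A by (auto simp: cl2_zero_def)
  show ?thesis
  proof
    assume "pseudosimilar a b"
    then obtain u where u: "u \<notin> cl2_Z" "cl2_mult a u = cl2_mult (cl2_conj u) b"
      unfolding pseudosimilar_def by blast
    obtain u0 u1 u2 u3 where U: "u = Cl2 u0 u1 u2 u3" by (cases u)
    have Hu: "u0^2 - u1^2 - u2^2 + u3^2 \<noteq> 0" using u(1) U by (simp add: cl2_Z_def cl2_H_def)
    note c = conv_dir[OF Hu u(2)[unfolded A B U]]
    show "cl2_add (cl2_conj a) b = cl2_zero \<or>
            (cl2_H a = cl2_H b \<and> cl2_H (cl2_add (cl2_conj a) b) \<noteq> 0)"
      using c A B by (auto simp: cl2_add_def cl2_conj_def cl2_zero_def cl2_H_def)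
  next
    assume h: "cl2_add (cl2_conj a) b = cl2_zero \<or>
            (cl2_H a = cl2_H b \<and> cl2_H (cl2_add (cl2_conj a) b) \<noteq> 0)"
    show "pseudosimilar a b"
    proof (cases "cl2_add (cl2_conj a) b = cl2_zero")
      case True
      then have b: "b0 = - a0" "b1 = a1" "b2 = a2" "b3 = a3"
        using A B by (auto simp: cl2_add_def cl2_conj_def cl2_zero_def)
      have ex: "\<exists>u0 u1 u2 u3. u0^2 - u1^2 - u2^2 + u3^2 \<noteq> 0 \<and>
                 a0 * u0 + a1 * u1 + a2 * u2 - a3 * u3 = 0"
      proof (cases "a0 = 0 \<and> a3 = 0")
        case True
        then have "a1^2 + a2^2 > 0" using anz by (auto simp: sum_power2_gt_zero_iff)
        then show ?thesis using True
          by (intro exI[of _ 0] exI[of _ a2] exI[of _ "-a1"]) auto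
      next
        case False
        then have "a3^2 + a0^2 > 0" by (auto simp: sum_power2_gt_zero_iff)
        then show ?thesis
          by (intro exI[of _ a3] exI[of _ 0] exI[of _ 0] exI[of _ a0]) (auto simp: algebra_simps)
      qed
      then obtain u0 u1 u2 u3 where u: "u0^2 - u1^2 - u2^2 + u3^2 \<noteq> 0"
        "a0 * u0 + a1 * u1 + a2 * u2 - a3 * u3 = 0" by blast
      show ?thesis unfolding pseudosimilar_def
        apply (rule exI[of _ "Cl2 u0 u1 u2 u3"])
        using u A B b by (auto simp: cl2_Z_def cl2_H_def cl2_mult_def cl2_conj_def algebra_simps)
    next
      case False
      with h have hh: "cl2_H a = cl2_H b" "cl2_H (cl2_add (cl2_conj a) b) \<noteq> 0" by auto
      show ?thesis unfolding pseudosimilar_def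
        apply (rule exI[of _ "cl2_add (cl2_conj a) b"])
        using hh A B by (auto simp: cl2_Z_def cl2_H_def cl2_mult_def cl2_conj_def cl2_add_def
          algebra_simps power2_eq_square)
    qed
  qed
qed

end
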